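(* For positive integers $a\ge b$ and odd $k\ge3$, $$\delta_k\binom{ap}{bp}^{\mathfrak a}=-\frac{T^k}{k}\big[a^k-b^k-(a-b)^k\big]\binom{ap}{bp}^{\mathfrak a}.$$
   Context: $\mathcal M^{(1)}=\mathbb Q[\zeta^{\mathfrak a}(3),\zeta^{\mathfrak a}(5),\dots]$ is the free polynomial subalgebra of depth-one motivic MZVs in $\mathcal A=\mathcal H/\zeta^{\mathfrak m}(2)\mathcal H$; $\zeta^{\mathfrak a}(k)=0$ for even $k$. For odd $k\ge3$, $\delta_k$ is the continuous $\mathbb Q((T))$-linear derivation $\partial/\partial\zeta^{\mathfrak a}(k)$ of $\mathcal M^{(1)}((T))$. $H^{\mathfrak a}(n)=(-1)^n\sum_{j\ge1}\binom{n+j-1}{n-1}\zeta^{\mathfrak a}(n+j)T^j$; $H^{\mathfrak a}(1^0)=1$, $H^{\mathfrak a}(1^n)=\frac1n\sum_{i=1}^n(-1)^{i-1}H^{\mathfrak a}(i)H^{\mathfrak a}(1^{n-i})$; $c_n^{\mathfrak a}=n\sum_{j\ge0}(n-1)^jT^jH^{\mathfrak a}(1^j)$ for $n\ge1$; and $\binom{ap}{bp}^{\mathfrak a}=\dfrac{c^{\mathfrak a}_a\cdots c^{\mathfrak a}_{a-b+1}}{c^{\mathfrak a}_b\cdots c^{\mathfrak a}_1}$. *)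

theory Defs
  imports Main "HOL-Library.Poly_Mapping" "HOL-Computational_Algebra.Formal_Power_Series"
begin

text \<open>The free polynomial algebra M1 = Q[zeta_a(3), zeta_a(5), ...] is modelled by letting
  the variable with index k (k odd, k >= 3) stand for zeta_a(k); other variables are unused.\<close>

type_synonym mpol = "(nat \<Rightarrow>\<^sub>0 nat) \<Rightarrow>\<^sub>0 rat"

definition mconst :: "rat \<Rightarrow> mpol" where
  "mconst c = Poly_Mapping.single 0 c"

definition mvar :: "nat \<Rightarrow> mpol" where
  "mvar k = Poly_Mapping.single (Poly_Mapping.single k 1) 1"

definition zeta_a :: "nat \<Rightarrow> mpol" where
  "zeta_a n = (if odd n \<and> 3 \<le> n then mvar n else 0)"

definition mpartial :: "nat \<Rightarrow> mpol \<Rightarrow> mpol" where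
  "mpartial v p = (\<Sum>m\<in>Poly_Mapping.keys p.
      Poly_Mapping.single (m - Poly_Mapping.single v (1::nat))
        (rat_of_nat (Poly_Mapping.lookup m v) * Poly_Mapping.lookup p m))"

text \<open>delta_k: the continuous Q((T))-linear derivation d/d zeta_a(k), acting coefficientwise.
  All series occurring here are power series in T.\<close>
definition delta :: "nat \<Rightarrow> mpol fps \<Rightarrow> mpol fps" where
  "delta k f = Abs_fps (\<lambda>j. mpartial k (fps_nth f j))"

definition Ha :: "nat \<Rightarrow> mpol fps" where
  "Ha n = Abs_fps (\<lambda>j. if j = 0 then 0
      else (-1) ^ n * of_nat ((n + j - 1) choose (n - 1)) * zeta_a (n + j))"

function Ha1 :: "nat \<Rightarrow> mpol fps" where
  "Ha1 n = (if n = 0 then 1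
     else fps_const (mconst (1 / of_nat n)) *
       (\<Sum>i\<in>{1..n}. (-1) ^ (i - 1) * Ha i * Ha1 (n - i)))"
  by auto
termination
  by (relation "measure id") auto

declare Ha1.simps [simp del]

text \<open>c_n = n sum_{j>=0} (n-1)^j T^j H_a(1^j); coefficient of T^m.\<close>
definition ca :: "nat \<Rightarrow> mpol fps" where
  "ca n = Abs_fps (\<lambda>m. of_nat n * (\<Sum>j\<le>m. of_nat ((n - 1) ^ j) * (fps_nth (Ha1 j) (m - j))))"

text \<open>binom(ap, bp)_a = (c_a ... c_{a-b+1}) / (c_b ... c_1).  The denominator has
  invertible constant term b!, so the quotient is the product with its power series inverse.\<close>
definition binom_a :: "nat \<Rightarrow> nat \<Rightarrow> mpol fps" where
  "binom_a a b = (let D = (\<Prod>i\<in>{1..b}. ca i) in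
     (\<Prod>i\<in>{a - b + 1..a}. ca i) * fps_right_inverse D (mconst (1 / of_nat (fact b))))"

end

theory Submission
  imports Defs
begin

lemma mpartial_superset:
  assumes "finite S" "Poly_Mapping.keys p \<subseteq> S"
  shows "mpartial v p = (\<Sum>m\<in>S. Poly_Mapping.single (m - Poly_Mapping.single v (1::nat))
        (rat_of_nat (Poly_Mapping.lookup m v) * Poly_Mapping.lookup p m))"
  unfolding mpartial_def
  by (rule sum.mono_neutral_left) (use assms in \<open>auto simp flip: lookup_not_eq_zero_eq_in_keys\<close>)

lemma mpartial_add: "mpartial v (p + q) = mpartial v p + mpartial v q"
  unfolding mpartial_def
  by (rule setsum_keys_plus_distrib) (simp_all add: single_add distrib_left)

lemma mpartial_zero[simp]: "mpartial v 0 = 0"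
  by (simp add: mpartial_def)

lemma mpartial_sum: "mpartial v (\<Sum>i\<in>I. f i) = (\<Sum>i\<in>I. mpartial v (f i))"
  by (induction I rule: infinite_finite_induct) (simp_all add: mpartial_add)

lemma mpartial_uminus: "mpartial v (- p) = - mpartial v p"
  by (metis add_eq_0_iff mpartial_add mpartial_zero neg_eq_iff_add_eq_0)

lemma mpartial_single: "mpartial v (Poly_Mapping.single m c) =
   Poly_Mapping.single (m - Poly_Mapping.single v (1::nat)) (rat_of_nat (Poly_Mapping.lookup m v) * c)"
  by (subst mpartial_superset[of "{m}"]) auto

lemma pm_decomp: "(p::('a \<Rightarrow>\<^sub>0 'b::comm_monoid_add)) = (\<Sum>m\<in>Poly_Mapping.keys p. Poly_Mapping.single m (Poly_Mapping.lookup p m))"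
proof (rule poly_mapping_eqI)
  fix k
  have "Poly_Mapping.lookup (\<Sum>m\<in>Poly_Mapping.keys p. Poly_Mapping.single m (Poly_Mapping.lookup p m)) k
     = (\<Sum>m\<in>Poly_Mapping.keys p. (Poly_Mapping.lookup p m when m = k))"
    by (simp add: lookup_sum lookup_single when_def eq_commute)
  also have "\<dots> = Poly_Mapping.lookup p k"
    by (cases "k \<in> Poly_Mapping.keys p") (auto simp: when_def in_keys_iff sum.delta)
  finally show "Poly_Mapping.lookup p k = Poly_Mapping.lookup (\<Sum>m\<in>Poly_Mapping.keys p. Poly_Mapping.single m (Poly_Mapping.lookup p m)) k" by simp
qed

lemma mpartial_single_mult:
  "mpartial v (Poly_Mapping.single m a * Poly_Mapping.single n b) =
   mpartial v (Poly_Mapping.single m a) * Poly_Mapping.single n b +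
   Poly_Mapping.single m a * mpartial v (Poly_Mapping.single n b)"
proof -
  let ?e = "Poly_Mapping.single v (1::nat)"
  have 1: "Poly_Mapping.single (m - ?e + n) (rat_of_nat (Poly_Mapping.lookup m v) * a * b) =
           Poly_Mapping.single (m + n - ?e) (rat_of_nat (Poly_Mapping.lookup m v) * a * b)"
  proof (cases "Poly_Mapping.lookup m v = 0")
    case False
    have "m - ?e + n = m + n - ?e"
      by (rule poly_mapping_eqI) (use False in \<open>auto simp: lookup_add lookup_minus lookup_single when_def\<close>; presburger)
    then show ?thesis by simp
  qed simp
  have 2: "Poly_Mapping.single (m + (n - ?e)) (a * (rat_of_nat (Poly_Mapping.lookup n v) * b)) =
           Poly_Mapping.single (m + n - ?e) (a * (rat_of_nat (Poly_Mapping.lookup n v) * b))"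
  proof (cases "Poly_Mapping.lookup n v = 0")
    case False
    have "m + (n - ?e) = m + n - ?e"
      by (rule poly_mapping_eqI) (use False in \<open>auto simp: lookup_add lookup_minus lookup_single when_def\<close>; presburger)
    then show ?thesis by simp
  qed simp
  have L: "mpartial v (Poly_Mapping.single m a * Poly_Mapping.single n b) =
    Poly_Mapping.single (m + n - ?e) (rat_of_nat (Poly_Mapping.lookup m v) * a * b)
    + Poly_Mapping.single (m + n - ?e) (a * (rat_of_nat (Poly_Mapping.lookup n v) * b))"
    by (simp only: mult_single mpartial_single lookup_add of_nat_add single_add[symmetric]) (simp add: algebra_simps)
  have R1: "mpartial v (Poly_Mapping.single m a) * Poly_Mapping.single n b =
     Poly_Mapping.single (m - ?e + n) (rat_of_nat (Poly_Mapping.lookup m v) * a * b)"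
    by (simp only: mult_single mpartial_single)
  have R2: "Poly_Mapping.single m a * mpartial v (Poly_Mapping.single n b) =
     Poly_Mapping.single (m + (n - ?e)) (a * (rat_of_nat (Poly_Mapping.lookup n v) * b))"
    by (simp only: mult_single mpartial_single)
  show ?thesis using L R1 R2 1 2 by simp
qed

lemma mpartial_mult: "mpartial v (p * q) = mpartial v p * q + p * mpartial v q"
proof -
  have "p * q = (\<Sum>m\<in>Poly_Mapping.keys p. \<Sum>n\<in>Poly_Mapping.keys q. Poly_Mapping.single m (Poly_Mapping.lookup p m) * Poly_Mapping.single n (Poly_Mapping.lookup q n))"
    by (subst pm_decomp[of p], subst pm_decomp[of q]) (simp add: sum_product)
  then have "mpartial v (p * q) = (\<Sum>m\<in>Poly_Mapping.keys p. \<Sum>n\<in>Poly_Mapping.keys q.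
     mpartial v (Poly_Mapping.single m (Poly_Mapping.lookup p m)) * Poly_Mapping.single n (Poly_Mapping.lookup q n) +
     Poly_Mapping.single m (Poly_Mapping.lookup p m) * mpartial v (Poly_Mapping.single n (Poly_Mapping.lookup q n)))"
    by (simp add: mpartial_sum mpartial_single_mult)
  also have "\<dots> = mpartial v (\<Sum>m\<in>Poly_Mapping.keys p. Poly_Mapping.single m (Poly_Mapping.lookup p m)) * (\<Sum>n\<in>Poly_Mapping.keys q. Poly_Mapping.single n (Poly_Mapping.lookup q n))
     + (\<Sum>m\<in>Poly_Mapping.keys p. Poly_Mapping.single m (Poly_Mapping.lookup p m)) * mpartial v (\<Sum>n\<in>Poly_Mapping.keys q. Poly_Mapping.single n (Poly_Mapping.lookup q n))"
    by (simp add: mpartial_sum sum.distrib sum_product)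
  finally show ?thesis by (simp flip: pm_decomp)
qed

lemma mpartial_mconst[simp]: "mpartial v (mconst c) = 0"
  by (simp add: mconst_def mpartial_single)

lemma mpartial_mvar: "mpartial v (mvar n) = (if n = v then 1 else 0)"
  by (auto simp: mvar_def mpartial_single lookup_single)


lemma mconst_add: "mconst (a + b) = mconst a + mconst b"
  by (simp add: mconst_def single_add)
lemma mconst_mult: "mconst (a * b) = mconst a * mconst b"
  by (simp add: mconst_def mult_single)
lemma mconst_uminus: "mconst (- a) = - mconst a"
  by (simp add: mconst_def single_uminus)
lemma mconst_0[simp]: "mconst 0 = 0"
  by (simp add: mconst_def)
lemma mconst_1[simp]: "mconst 1 = 1"
  by (simp add: mconst_def)
lemma mconst_of_nat: "of_nat n = mconst (of_nat n)"
  by (simp add: mconst_def)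
lemma mconst_power: "mconst (a ^ n) = mconst a ^ n"
  by (induction n) (simp_all add: mconst_mult)
lemma mconst_sum: "mconst (\<Sum>i\<in>I. f i) = (\<Sum>i\<in>I. mconst (f i))"
  by (induction I rule: infinite_finite_induct) (simp_all add: mconst_add)
lemma mconst_prod: "mconst (\<Prod>i\<in>I. f i) = (\<Prod>i\<in>I. mconst (f i))"
  by (induction I rule: infinite_finite_induct) (simp_all add: mconst_mult)

lemma mpartial_const_mult: "mpartial v (mconst c * p) = mconst c * mpartial v p"
  by (simp add: mpartial_mult)

lemma mpartial_one[simp]: "mpartial v 1 = 0"
  using mpartial_mconst[of v 1] by simp

lemma mpartial_of_nat[simp]: "mpartial v (of_nat n) = 0"
  by (simp add: mconst_of_nat)

lemma delta_nth[simp]: "fps_nth (delta k f) j = mpartial k (fps_nth f j)"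
  by (simp add: delta_def)

lemma delta_add: "delta k (f + g) = delta k f + delta k g"
  by (rule fps_ext) (simp add: mpartial_add)

lemma delta_sum: "delta k (\<Sum>i\<in>I. f i) = (\<Sum>i\<in>I. delta k (f i))"
  by (rule fps_ext) (simp add: fps_sum_nth mpartial_sum)

lemma delta_uminus: "delta k (- f) = - delta k f"
  by (rule fps_ext) (simp add: mpartial_uminus)

lemma delta_diff: "delta k (f - g) = delta k f - delta k g"
  using delta_add[of k f "-g"] by (simp add: delta_uminus)

lemma delta_mult: "delta k (f * g) = delta k f * g + f * delta k g"
  by (rule fps_ext) (simp add: fps_mult_nth mpartial_sum mpartial_mult sum.distrib)

lemma delta_const[simp]: "delta k (fps_const (mconst c)) = 0"
  by (rule fps_ext) (simp add: mconst_def mpartial_single)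

lemma delta_one[simp]: "delta k 1 = 0"
  by (rule fps_ext) simp

lemma delta_X_power[simp]: "delta k (fps_X ^ p) = 0"
  by (rule fps_ext) simp

lemma delta_neg_one_power[simp]: "delta k ((-1) ^ p) = 0"
proof -
  have "((-1::mpol fps) ^ p) = fps_const (mconst ((-1) ^ p))"
    by (simp add: mconst_power mconst_uminus flip: fps_const_power fps_const_neg)
  then show ?thesis by simp
qed

lemma delta_of_nat[simp]: "delta k (of_nat n) = 0"
  by (simp add: mconst_of_nat flip: fps_of_nat)

lemma delta_cmult: "delta k (fps_const (mconst c) * f) = fps_const (mconst c) * delta k f"
  by (simp add: delta_mult)


lemma mpartial_zeta:
  assumes "odd k" "3 \<le> k"
  shows "mpartial k (zeta_a n) = (if n = k then 1 else 0)"
  using assms by (auto simp: zeta_a_def mpartial_mvar)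

lemma sign_const: "((-1::mpol) ^ l * of_nat c) = mconst ((-1) ^ l * of_nat c)"
  by (simp add: mconst_mult mconst_power mconst_uminus mconst_of_nat)

lemma delta_Ha:
  assumes "odd k" "3 \<le> k" "1 \<le> l"
  shows "delta k (Ha l) = (if l < k then fps_const (mconst ((-1) ^ l * of_nat ((k - 1) choose (l - 1))))
                 * fps_X ^ (k - l) else 0)"
proof (rule fps_ext)
  fix j
  show "fps_nth (delta k (Ha l)) j = fps_nth (if l < k then fps_const (mconst ((-1) ^ l * of_nat ((k - 1) choose (l - 1))))
                 * fps_X ^ (k - l) else 0) j"
  proof (cases "j = 0")
    case True
    then show ?thesis by (simp add: Ha_def)
  next
    case False
    have "fps_nth (delta k (Ha l)) j = mpartial k (mconst ((-1) ^ l * of_nat ((l + j - 1) choose (l - 1))) * zeta_a (l + j))"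
      using False by (simp add: Ha_def sign_const)
    also have "\<dots> = mconst ((-1) ^ l * of_nat ((l + j - 1) choose (l - 1))) * (if l + j = k then 1 else 0)"
      by (simp add: mpartial_const_mult mpartial_zeta assms)
    also have "\<dots> = fps_nth (if l < k then fps_const (mconst ((-1) ^ l * of_nat ((k - 1) choose (l - 1))))
                 * fps_X ^ (k - l) else 0) j"
      using False assms by auto
    finally show ?thesis .
  qed
qed

definition dd :: "nat \<Rightarrow> nat \<Rightarrow> mpol fps" where
  "dd k l = (if l < k then fps_const (mconst (- of_nat ((k - 1) choose (l - 1)) / of_nat l)) * fps_X ^ (k - l) else 0)"

lemma of_nat_fps_mconst: "(of_nat n :: mpol fps) = fps_const (mconst (of_nat n))"
  by (simp add: mconst_of_nat flip: fps_of_nat)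

lemma neg_one_power_fps: "((-1 :: mpol fps) ^ n) = fps_const (mconst ((-1) ^ n))"
  by (simp add: mconst_power mconst_uminus flip: fps_const_power fps_const_neg)

lemma delta_Ha_dd:
  assumes "odd k" "3 \<le> k" "1 \<le> l"
  shows "(-1) ^ (l - 1) * delta k (Ha l) = of_nat l * dd k l"
proof (cases "l < k")
  case True
  obtain m where l: "l = Suc m" using assms by (cases l) auto
  have r: "(-1) ^ (l - 1) * ((-1) ^ l * of_nat ((k - 1) choose (l - 1))) =
        (of_nat l * (- of_nat ((k - 1) choose (l - 1)) / of_nat l) :: rat)"
    by (simp add: l)
  have e: "delta k (Ha l) = fps_const (mconst ((-1) ^ l * of_nat ((k - 1) choose (l - 1)))) * fps_X ^ (k - l)"
    using delta_Ha[OF assms] True by simp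
  show ?thesis using True
    by (simp add: e dd_def neg_one_power_fps of_nat_fps_mconst mult.assoc
         flip: mconst_mult fps_const_mult) (simp add: l flip: mconst_mult)
next
  case False
  then show ?thesis using delta_Ha[OF assms] by (simp add: dd_def)
qed

lemma Ha1_0[simp]: "Ha1 0 = 1"
  by (simp add: Ha1.simps)

lemma Ha1_rec: "0 < n \<Longrightarrow> Ha1 n = fps_const (mconst (1 / of_nat n)) *
       (\<Sum>i\<in>{1..n}. (-1) ^ (i - 1) * Ha i * Ha1 (n - i))"
  by (subst Ha1.simps) simp

lemma inv_nat_fps: "0 < n \<Longrightarrow> of_nat n * fps_const (mconst (1 / of_nat n)) = (1 :: mpol fps)"
  by (simp add: of_nat_fps_mconst flip: mconst_mult)

lemma Ha1_R: "(\<Sum>i\<in>{1..n}. (-1) ^ (i - 1) * Ha i * Ha1 (n - i)) = of_nat n * Ha1 n"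
proof (cases "n = 0")
  case False
  then have "of_nat n * Ha1 n = (of_nat n * fps_const (mconst (1 / of_nat n))) *
       (\<Sum>i\<in>{1..n}. (-1) ^ (i - 1) * Ha i * Ha1 (n - i))"
    by (subst Ha1_rec) (simp_all add: mult.assoc)
  then show ?thesis using False by (simp add: inv_nat_fps)
qed simp


lemma delta_Ha1:
  assumes "odd k" "3 \<le> k"
  shows "delta k (Ha1 j) = (\<Sum>l\<in>{1..j}. dd k l * Ha1 (j - l))"
proof (induction j rule: less_induct)
  case (less j)
  show ?case
  proof (cases "j = 0")
    case True then show ?thesis by simp
  next
    case False
    define C where "C = fps_const (mconst (1 / of_nat j))"
    have A: "(\<Sum>i\<in>{1..j}. (-1) ^ (i - 1) * delta k (Ha i) * Ha1 (j - i)) =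
             (\<Sum>i\<in>{1..j}. of_nat i * dd k i * Ha1 (j - i))"
    proof (rule sum.cong)
      fix i assume "i \<in> {1..j}"
      then have "1 \<le> i" by simp
      from delta_Ha_dd[OF assms this]
      show "(-1) ^ (i - 1) * delta k (Ha i) * Ha1 (j - i) = of_nat i * dd k i * Ha1 (j - i)"
        by simp
    qed simp
    have "(\<Sum>i\<in>{1..j}. (-1) ^ (i - 1) * Ha i * delta k (Ha1 (j - i))) =
          (\<Sum>i\<in>{1..j}. \<Sum>l\<in>{l\<in>{1..j}. i + l \<le> j}. (-1) ^ (i - 1) * Ha i * (dd k l * Ha1 (j - i - l)))"
    proof (rule sum.cong)
      fix i assume i: "i \<in> {1..j}"
      have s: "{l\<in>{1..j}. i + l \<le> j} = {1..j - i}" using i by auto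
      show "(-1) ^ (i - 1) * Ha i * delta k (Ha1 (j - i)) =
           (\<Sum>l\<in>{l\<in>{1..j}. i + l \<le> j}. (-1) ^ (i - 1) * Ha i * (dd k l * Ha1 (j - i - l)))"
        unfolding s using i by (simp add: less.IH sum_distrib_left)
    qed simp
    also have "\<dots> = (\<Sum>l\<in>{1..j}. \<Sum>i\<in>{i\<in>{1..j}. i + l \<le> j}. (-1) ^ (i - 1) * Ha i * (dd k l * Ha1 (j - i - l)))"
      by (rule sum.swap_restrict) simp_all
    also have "\<dots> = (\<Sum>l\<in>{1..j}. dd k l * (\<Sum>i\<in>{1..j - l}. (-1) ^ (i - 1) * Ha i * Ha1 (j - l - i)))"
    proof (rule sum.cong)
      fix l assume l: "l \<in> {1..j}"
      have s: "{i\<in>{1..j}. i + l \<le> j} = {1..j - l}" using l by auto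
      show "(\<Sum>i\<in>{i\<in>{1..j}. i + l \<le> j}. (-1) ^ (i - 1) * Ha i * (dd k l * Ha1 (j - i - l))) =
            dd k l * (\<Sum>i\<in>{1..j - l}. (-1) ^ (i - 1) * Ha i * Ha1 (j - l - i))"
        unfolding s sum_distrib_left
        by (rule sum.cong) (simp_all add: algebra_simps diff_commute)
    qed simp
    also have "\<dots> = (\<Sum>l\<in>{1..j}. of_nat (j - l) * dd k l * Ha1 (j - l))"
      by (simp only: Ha1_R) (simp add: mult_ac)
    finally have B: "(\<Sum>i\<in>{1..j}. (-1) ^ (i - 1) * Ha i * delta k (Ha1 (j - i))) =
       (\<Sum>l\<in>{1..j}. of_nat (j - l) * dd k l * Ha1 (j - l))" .
    have "delta k (Ha1 j) = C * delta k (\<Sum>i\<in>{1..j}. (-1) ^ (i - 1) * Ha i * Ha1 (j - i))"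
      using False by (simp add: Ha1_rec C_def delta_cmult)
    also have "delta k (\<Sum>i\<in>{1..j}. (-1) ^ (i - 1) * Ha i * Ha1 (j - i)) =
       (\<Sum>i\<in>{1..j}. (-1) ^ (i - 1) * delta k (Ha i) * Ha1 (j - i)) +
       (\<Sum>i\<in>{1..j}. (-1) ^ (i - 1) * Ha i * delta k (Ha1 (j - i)))"
      by (simp add: delta_sum delta_mult sum.distrib algebra_simps)
    also have "\<dots> = (\<Sum>l\<in>{1..j}. of_nat j * (dd k l * Ha1 (j - l)))"
      unfolding A B sum.distrib[symmetric]
      by (rule sum.cong) (simp_all add: algebra_simps flip: distrib_right of_nat_add)
    also have "C * \<dots> = (C * of_nat j) * (\<Sum>l\<in>{1..j}. dd k l * Ha1 (j - l))"
      by (simp add: sum_distrib_left mult.assoc)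
    also have "C * of_nat j = 1"
      using False inv_nat_fps[of j] by (simp add: C_def mult.commute)
    finally show ?thesis by simp
  qed
qed


definition SS :: "mpol \<Rightarrow> (nat \<Rightarrow> mpol fps) \<Rightarrow> mpol fps" where
  "SS u F = Abs_fps (\<lambda>m. \<Sum>j\<le>m. u ^ j * fps_nth (F j) (m - j))"

lemma SS_nth: "fps_nth (SS u F) m = (\<Sum>j\<le>m. u ^ j * fps_nth (F j) (m - j))"
  by (simp add: SS_def)

lemma ca_SS: "ca n = fps_const (of_nat n) * SS (of_nat (n - 1)) Ha1"
  by (rule fps_ext) (simp add: ca_def SS_nth)

lemma delta_SS: "delta k (SS (mconst c) F) = SS (mconst c) (\<lambda>j. delta k (F j))"
  by (rule fps_ext) (simp add: SS_nth mpartial_sum flip: mconst_power add: mpartial_const_mult)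

lemma SS_sum: "SS u (\<lambda>j. \<Sum>l\<in>L. F l j) = (\<Sum>l\<in>L. SS u (F l))"
  by (rule fps_ext) (simp add: SS_nth fps_sum_nth sum_distrib_left sum.swap[of _ L])


lemma SS_cmult: "SS u (\<lambda>j. D * F j) = D * SS u F"
proof (rule fps_ext)
  fix m
  have "fps_nth (SS u (\<lambda>j. D * F j)) m =
      (\<Sum>j\<in>{..m}. \<Sum>i\<in>{0..m - j}. u ^ j * (fps_nth D i * fps_nth (F j) (m - j - i)))"
    by (simp only: SS_nth fps_mult_nth sum_distrib_left)
  also have "\<dots> = (\<Sum>j\<in>{..m}. \<Sum>i\<in>{i\<in>{..m}. j + i \<le> m}. u ^ j * (fps_nth D i * fps_nth (F j) (m - j - i)))"
    by (intro sum.cong refl) auto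
  also have "\<dots> = (\<Sum>i\<in>{..m}. \<Sum>j\<in>{j\<in>{..m}. j + i \<le> m}. u ^ j * (fps_nth D i * fps_nth (F j) (m - j - i)))"
    by (rule sum.swap_restrict) simp_all
  also have "\<dots> = (\<Sum>i\<in>{..m}. \<Sum>j\<in>{..m - i}. u ^ j * (fps_nth D i * fps_nth (F j) (m - j - i)))"
    by (intro sum.cong refl) auto
  also have "\<dots> = (\<Sum>i\<in>{0..m}. fps_nth D i * (\<Sum>j\<le>m - i. u ^ j * fps_nth (F j) (m - i - j)))"
    unfolding atLeast0AtMost sum_distrib_left
    by (intro sum.cong refl) (simp add: algebra_simps)
  also have "\<dots> = fps_nth (D * SS u F) m"
    by (simp only: SS_nth fps_mult_nth)
  finally show "fps_nth (SS u (\<lambda>j. D * F j)) m = fps_nth (D * SS u F) m" .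
qed

lemma SS_shift: "SS u (\<lambda>j. if l \<le> j then F (j - l) else 0) = fps_const (u ^ l) * (fps_X ^ l * SS u F)"
proof (rule fps_ext)
  fix m
  show "fps_nth (SS u (\<lambda>j. if l \<le> j then F (j - l) else 0)) m = fps_nth (fps_const (u ^ l) * (fps_X ^ l * SS u F)) m"
  proof (cases "m < l")
    case True
    then show ?thesis by (simp add: SS_nth fps_X_power_mult_nth)
  next
    case False
    have "fps_nth (SS u (\<lambda>j. if l \<le> j then F (j - l) else 0)) m =
       (\<Sum>j\<in>{l..m}. u ^ j * fps_nth (F (j - l)) (m - j))"
      unfolding SS_nth
      by (rule sum.mono_neutral_cong_right) auto
    also have "\<dots> = (\<Sum>j\<in>{0 + l..(m - l) + l}. u ^ j * fps_nth (F (j - l)) (m - j))"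
      using False by simp
    also have "\<dots> = (\<Sum>j\<in>{0..m - l}. u ^ (j + l) * fps_nth (F j) (m - l - j))"
      by (subst sum.shift_bounds_cl_nat_ivl) (rule sum.cong; simp add: add.commute)
    also have "\<dots> = fps_nth (fps_const (u ^ l) * (fps_X ^ l * SS u F)) m"
      using False by (simp only: fps_mult_left_const_nth fps_X_power_mult_nth if_False SS_nth)
         (simp add: sum_distrib_left power_add atLeast0AtMost algebra_simps)
    finally show ?thesis .
  qed
qed



lemma rat_ident:
  assumes "1 \<le> k"
  shows "(\<Sum>l\<in>{1..<k}. - of_nat ((k - 1) choose (l - 1)) / of_nat l * (x::rat) ^ l)
       = - ((x + 1) ^ k - 1 - x ^ k) / of_nat k"
proof -
  obtain k' where k: "k = Suc k'" using assms by (cases k) auto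
  have c: "of_nat ((k - 1) choose (l - 1)) / of_nat l = (of_nat (k choose l) / of_nat k :: rat)"
    if lk: "l \<in> {1..<k}" for l
  proof -
    obtain l' where l: "l = Suc l'" using lk by (cases l) auto
    have "of_nat (Suc k' * (k' choose l')) = (of_nat ((Suc k' choose Suc l') * Suc l') :: rat)"
      by (simp only: Suc_times_binomial_eq)
    then show ?thesis unfolding k l by (simp add: field_simps)
  qed
  have "(\<Sum>l\<in>{1..<k}. - of_nat ((k - 1) choose (l - 1)) / of_nat l * x ^ l)
     = (\<Sum>l\<in>{1..<k}. - (of_nat (k choose l) * x ^ l / of_nat k))"
  proof (rule sum.cong[OF refl])
    fix l assume lk: "l \<in> {1..<k}"
    show "- of_nat ((k - 1) choose (l - 1)) / of_nat l * x ^ l = - (of_nat (k choose l) * x ^ l / of_nat k)"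
      by (subst minus_divide_left[symmetric], subst c[OF lk]) simp
  qed
  also have "\<dots> = - (\<Sum>l\<in>{1..<k}. of_nat (k choose l) * x ^ l) / of_nat k"
    by (simp add: sum_negf sum_divide_distrib)
  also have "(\<Sum>l\<in>{1..<k}. of_nat (k choose l) * x ^ l) = (x + 1) ^ k - 1 - x ^ k"
  proof -
    have "(x + 1) ^ k = (\<Sum>l\<le>k. of_nat (k choose l) * x ^ l)"
      by (simp add: binomial_ring)
    also have "\<dots> = (\<Sum>l\<le>k'. of_nat (k choose l) * x ^ l) + x ^ k"
      by (simp add: k)
    also have "(\<Sum>l\<le>k'. of_nat (k choose l) * x ^ l) = 1 + (\<Sum>l\<in>{Suc 0..k'}. of_nat (k choose l) * x ^ l)"
      by (simp add: atMost_atLeast0 sum.atLeast_Suc_atMost)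
    also have "{Suc 0..k'} = {1..<k}" by (auto simp: k)
    finally show ?thesis by simp
  qed
  finally show ?thesis .
qed

lemma fps_const_sum: "fps_const (\<Sum>i\<in>I. f i) = (\<Sum>i\<in>I. fps_const (f i))"
  by (induction I rule: infinite_finite_induct) (simp_all flip: fps_const_add)


lemma dd_sum_shift:
  "(\<Sum>l\<in>{1..j}. dd k l * Ha1 (j - l)) = (\<Sum>l\<in>{1..<k}. dd k l * (if l \<le> j then Ha1 (j - l) else 0))"
proof -
  have "(\<Sum>l\<in>{1..j}. dd k l * Ha1 (j - l)) = (\<Sum>l\<in>{1..j} \<inter> {1..<k}. dd k l * Ha1 (j - l))"
    by (rule sum.mono_neutral_right) (auto simp: dd_def)
  also have "\<dots> = (\<Sum>l\<in>{1..<k}. dd k l * (if l \<le> j then Ha1 (j - l) else 0))"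
    by (rule sum.mono_neutral_cong_left) auto
  finally show ?thesis .
qed

lemma dd_coeff_sum:
  assumes "1 \<le> k"
  shows "(\<Sum>l\<in>{1..<k}. dd k l * (fps_const (mconst x ^ l) * fps_X ^ l))
     = fps_const (mconst (- ((x + 1) ^ k - 1 - x ^ k) / of_nat k)) * fps_X ^ k"
proof -
  have "(\<Sum>l\<in>{1..<k}. dd k l * (fps_const (mconst x ^ l) * fps_X ^ l))
     = (\<Sum>l\<in>{1..<k}. fps_const (mconst (- of_nat ((k - 1) choose (l - 1)) / of_nat l * x ^ l)) * fps_X ^ k)"
  proof (rule sum.cong[OF refl])
    fix l assume l: "l \<in> {1..<k}"
    then have X: "fps_X ^ (k - l) * fps_X ^ l = (fps_X ^ k :: mpol fps)"
      by (simp flip: power_add)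
    have dl: "dd k l = fps_const (mconst (- of_nat ((k - 1) choose (l - 1)) / of_nat l)) * fps_X ^ (k - l)"
      using l by (simp add: dd_def)
    have "dd k l * (fps_const (mconst x ^ l) * fps_X ^ l) =
      (fps_const (mconst (- of_nat ((k - 1) choose (l - 1)) / of_nat l)) * fps_const (mconst x ^ l)) * (fps_X ^ (k - l) * fps_X ^ l)"
      by (simp only: dl mult_ac)
    also have "\<dots> = fps_const (mconst (- of_nat ((k - 1) choose (l - 1)) / of_nat l * x ^ l)) * fps_X ^ k"
      by (simp only: fps_const_mult X mconst_mult[symmetric] mconst_power[symmetric])
    finally show "dd k l * (fps_const (mconst x ^ l) * fps_X ^ l) =
         fps_const (mconst (- of_nat ((k - 1) choose (l - 1)) / of_nat l * x ^ l)) * fps_X ^ k" .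
  qed
  also have "\<dots> = fps_const (mconst (\<Sum>l\<in>{1..<k}. - of_nat ((k - 1) choose (l - 1)) / of_nat l * x ^ l)) * fps_X ^ k"
    by (simp add: mconst_sum fps_const_sum sum_distrib_right)
  also have "\<dots> = fps_const (mconst (- ((x + 1) ^ k - 1 - x ^ k) / of_nat k)) * fps_X ^ k"
    by (simp only: rat_ident[OF assms])
  finally show ?thesis .
qed

lemma delta_ca:
  assumes "odd k" "3 \<le> k" "1 \<le> n"
  shows "delta k (ca n) = fps_const (mconst (- (of_nat n ^ k - 1 - of_nat (n - 1) ^ k) / of_nat k)) * fps_X ^ k * ca n"
proof -
  define u where "u = (of_nat (n - 1) :: rat)"
  have U: "(of_nat (n - 1) :: mpol) = mconst u" by (simp add: u_def mconst_of_nat)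
  have "delta k (SS (mconst u) Ha1) = SS (mconst u) (\<lambda>j. \<Sum>l\<in>{1..<k}. dd k l * (if l \<le> j then Ha1 (j - l) else 0))"
    by (simp only: delta_SS delta_Ha1[OF assms(1,2)] dd_sum_shift)
  also have "\<dots> = (\<Sum>l\<in>{1..<k}. dd k l * (fps_const (mconst u ^ l) * (fps_X ^ l * SS (mconst u) Ha1)))"
  proof -
    have "\<And>l j. dd k l * (if l \<le> j then Ha1 (j - l) else 0) = dd k l * (if l \<le> j then Ha1 (j - l) else 0)" by simp
    show ?thesis
      by (simp only: SS_sum SS_cmult SS_shift)
  qed
  also have "\<dots> = (\<Sum>l\<in>{1..<k}. dd k l * (fps_const (mconst u ^ l) * fps_X ^ l)) * SS (mconst u) Ha1"
    by (simp add: sum_distrib_right mult.assoc)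
  also have "(\<Sum>l\<in>{1..<k}. dd k l * (fps_const (mconst u ^ l) * fps_X ^ l)) = fps_const (mconst (- ((u + 1) ^ k - 1 - u ^ k) / of_nat k)) * fps_X ^ k"
    by (rule dd_coeff_sum) (use assms in simp)
  finally have D: "delta k (SS (mconst u) Ha1) = fps_const (mconst (- ((u + 1) ^ k - 1 - u ^ k) / of_nat k)) * fps_X ^ k * SS (mconst u) Ha1"
    .
  have u1: "u + 1 = of_nat n" using assms by (simp add: u_def)
  have "delta k (ca n) = fps_const (of_nat n) * delta k (SS (mconst u) Ha1)"
    unfolding ca_SS U by (simp add: mconst_of_nat[of n] delta_cmult)
  also have "\<dots> = fps_const (mconst (- (of_nat n ^ k - 1 - of_nat (n - 1) ^ k) / of_nat k)) * fps_X ^ k * ca n"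
    unfolding ca_SS U D u1 by (simp add: mult_ac u_def)
  finally show ?thesis .
qed


definition gg :: "nat \<Rightarrow> nat \<Rightarrow> rat" where
  "gg k i = - (of_nat i ^ k - 1 - of_nat (i - 1) ^ k) / of_nat k"

lemma delta_prod_ca:
  assumes "finite A" "\<forall>i\<in>A. 1 \<le> i" "odd k" "3 \<le> k"
  shows "delta k (\<Prod>i\<in>A. ca i) = fps_const (mconst (\<Sum>i\<in>A. gg k i)) * fps_X ^ k * (\<Prod>i\<in>A. ca i)"
  using assms(1,2)
proof (induction A rule: finite_induct)
  case empty
  then show ?case by simp
next
  case (insert x F)
  have dx: "delta k (ca x) = fps_const (mconst (gg k x)) * fps_X ^ k * ca x"
    using delta_ca[OF assms(3,4), of x] insert.prems by (simp add: gg_def)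
  show ?case
    using insert by (simp add: delta_mult dx mconst_add algebra_simps flip: fps_const_add)
qed

lemma prod_nth0: "fps_nth (\<Prod>i\<in>A. f i) 0 = (\<Prod>i\<in>A. fps_nth (f i) 0)"
  by (induction A rule: infinite_finite_induct) simp_all

lemma ca_nth0: "fps_nth (ca n) 0 = of_nat n"
  by (simp add: ca_def)

lemma telescope:
  "(\<Sum>i\<in>{m + 1..m + c}. (of_nat i ^ k - 1 - of_nat (i - 1) ^ k :: rat)) = of_nat (m + c) ^ k - of_nat m ^ k - of_nat c"
proof (induction c)
  case 0
  then show ?case by simp
next
  case (Suc c)
  have "{m + 1..m + Suc c} = insert (Suc (m + c)) {m + 1..m + c}"
    by (simp add: atLeastAtMostSuc_conv)
  then show ?case using Suc by simp
qed


lemma sum_neg_div: "(\<Sum>i\<in>A. - f i / (c::rat)) = - (\<Sum>i\<in>A. f i) / c"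
  by (simp add: sum_divide_distrib sum_negf)

theorem mainTheorem10:
  fixes a b k :: nat
  assumes "1 \<le> b" and "b \<le> a" and "odd k" and "3 \<le> k"
  shows "delta k (binom_a a b) =
    fps_const (mconst (- (of_int (int a ^ k - int b ^ k - int (a - b) ^ k)) / of_nat k))
      * fps_X ^ k * binom_a a b"
proof -
  define N where "N = (\<Prod>i\<in>{a - b + 1..a}. ca i)"
  define D where "D = (\<Prod>i\<in>{1..b}. ca i)"
  define R where "R = fps_right_inverse D (mconst (1 / of_nat (fact b)))"
  define sN where "sN = (\<Sum>i\<in>{a - b + 1..a}. gg k i)"
  define sD where "sD = (\<Sum>i\<in>{1..b}. gg k i)"
  have B: "binom_a a b = N * R" by (simp add: binom_a_def N_def D_def R_def Let_def)
  have D0: "fps_nth D 0 = mconst (of_nat (fact b))"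
    by (simp add: D_def prod_nth0 ca_nth0 fact_prod mconst_of_nat mconst_prod)
  have DR: "D * R = 1"
    unfolding R_def by (rule fps_right_inverse) (simp add: D0 flip: mconst_mult)
  have dN: "delta k N = fps_const (mconst sN) * fps_X ^ k * N"
    unfolding N_def sN_def by (rule delta_prod_ca) (use assms in auto)
  have dD: "delta k D = fps_const (mconst sD) * fps_X ^ k * D"
    unfolding D_def sD_def by (rule delta_prod_ca) (use assms in auto)
  have "delta k (D * R) = 0" by (simp add: DR)
  then have e: "D * delta k R = - (delta k D * R)"
    by (simp add: delta_mult add_eq_0_iff)
  have dR: "delta k R = - (fps_const (mconst sD) * fps_X ^ k * R)"
  proof -
    have "delta k R = (R * D) * delta k R" by (simp add: DR mult.commute)
    also have "\<dots> = R * (D * delta k R)" by (simp add: mult.assoc)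
    also have "\<dots> = - (fps_const (mconst sD) * fps_X ^ k * R) * (D * R)"
      by (simp add: e dD algebra_simps)
    finally show ?thesis by (simp add: DR)
  qed
  have dB: "delta k (binom_a a b) = fps_const (mconst (sN - sD)) * fps_X ^ k * binom_a a b"
  proof -
    have m: "mconst (sN - sD) = mconst sN - mconst sD"
      using mconst_add[of sN "- sD"] mconst_uminus[of sD] by simp
    have f: "fps_const (mconst (sN - sD)) = fps_const (mconst sN) - fps_const (mconst sD)"
      by (simp add: m)
    show ?thesis unfolding B delta_mult dN dR f by (simp add: algebra_simps del: fps_const_sub)
  qed
  have tN: "(\<Sum>i\<in>{a - b + 1..a}. (of_nat i ^ k - 1 - of_nat (i - 1) ^ k :: rat)) = of_nat a ^ k - of_nat (a - b) ^ k - of_nat b"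
    using telescope[where m="a - b" and c=b and k=k] assms by simp
  have tD: "(\<Sum>i\<in>{1..b}. (of_nat i ^ k - 1 - of_nat (i - 1) ^ k :: rat)) = of_nat b ^ k - of_nat b"
    using telescope[where m=0 and c=b and k=k] assms by simp
  have "sN - sD = - (of_int (int a ^ k - int b ^ k - int (a - b) ^ k)) / of_nat k"
  proof -
    have "sN = - (of_nat a ^ k - of_nat (a - b) ^ k - of_nat b) / of_nat k"
      unfolding sN_def gg_def sum_neg_div tN ..
    moreover have "sD = - (of_nat b ^ k - of_nat b) / of_nat k"
      unfolding sD_def gg_def sum_neg_div tD ..
    ultimately show ?thesis
      using assms by (simp add: field_simps)
  qed
  then show ?thesis using dB by simp
qed

end
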